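(* Consider the relaxed problem with action set $\{a^*,\hat a\}$, and let $(v_n)$ be a uniformly bounded sequence of contracts, each of the form $v_n(z)=\phi_n(L_n(\hat a))$ for a weakly increasing $\phi_n:\mathbb{R}\to u([\underline w,\infty))$, satisfying $\int\phi_n(L_n(\hat a))\,d\mu^n_{a^*}-c(a^* )\ge\int\phi_n(L_n(\hat a))\,d\mu^n_{\hat a}-c(\hat a)$ for all $n$. Then $\mathrm{Var}_{a^*}[\phi_n(L_n(\hat a))]\ge\exp[-I_{a^*,\hat a}(\hat L_{\hat a}(\hat a))n+o(n)]$, i.e. $\liminf_n\frac1n\log\mathrm{Var}_{a^*}[\phi_n(L_n(\hat a))]\ge-I_{a^*,\hat a}(\hat L_{\hat a}(\hat a))$.
   Context: Finite action set $A$, $a^*\in A$, cost $c:A\to\mathbb{R}$, and $\hat a\in A$ with $c(\hat a)<c(a^* )$. A measurable space $Z$ with $\sigma$-finite measure $\nu$; for each $n$ and $a\in A$, a probability measure $\mu^n_a$ on $Z$ with density $g^n_a$ w.r.t. $\nu$; $\mathbb{P}_a$, $\mathrm{Var}_a$ denote probability and variance under $\mu^n_a$. For $a'\neq a^*$, $L_n(a')=\frac1n\log\frac{g^n_{a^*}(z)}{g^n_{a'}(z)}$, well-defined $\mu^n_a$-a.s. for all $a\in A$. For each $a\in A$, $a'\neq a^*$, $I_{a,a'}:\mathbb{R}\to[0,\infty]$ satisfies, for all measurable $B\subseteq\mathbb{R}$, $-\inf_{\mathrm{int}B}I_{a,a'}\le\liminf_n\frac1n\log\mathbb{P}_a[L_n(a')\in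 B]\le\limsup_n\frac1n\log\mathbb{P}_a[L_n(a')\in B]\le-\inf_{\mathrm{cl}B}I_{a,a'}$. Each $I_{a,a'}$ has a unique minimizer $\hat L_a(a')$, with $\hat L_a(a')\neq\hat L_{\tilde a}(a')$ for $a\neq\tilde a$, and compact level sets; $I_{a^*,a'}$ is continuous at $\hat L_{a'}(a')$ and $\hat L_{a^*}(a')$. $u:[\underline w,\infty)\to\mathbb{R}$ is the agent's (strictly increasing) utility. *)

theory Defs
  imports "HOL-Probability.Probability"
begin

definition mu :: "'z measure \<Rightarrow> (nat \<Rightarrow> 'a \<Rightarrow> 'z \<Rightarrow> real) \<Rightarrow> nat \<Rightarrow> 'a \<Rightarrow> 'z measure" where
  "mu \<nu> g n a = density \<nu> (\<lambda>z. ennreal (g n a z))"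

definition LLR :: "(nat \<Rightarrow> 'a \<Rightarrow> 'z \<Rightarrow> real) \<Rightarrow> 'a \<Rightarrow> nat \<Rightarrow> 'a \<Rightarrow> 'z \<Rightarrow> real" where
  "LLR g astar n a' z = ln (g n astar z / g n a' z) / real n"

definition elog :: "real \<Rightarrow> ereal" where
  "elog p = (if p = 0 then - \<infinity> else ereal (ln p))"

definition var :: "'z measure \<Rightarrow> ('z \<Rightarrow> real) \<Rightarrow> real" where
  "var M X = (\<integral>z. (X z - (\<integral>y. X y \<partial>M))\<^sup>2 \<partial>M)"

end

theory Submission
  imports Defs
begin

lemma dens_cmp:
  fixes \<nu> :: "'z measure" and g1 g2 h :: "'z \<Rightarrow> real"
  assumes m1[measurable]: "g1 \<in> borel_measurable \<nu>" and m2[measurable]: "g2 \<in> borel_measurable \<nu>"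
    and n1: "\<forall>z\<in>space \<nu>. 0 \<le> g1 z" and n2: "\<forall>z\<in>space \<nu>. 0 \<le> g2 z"
    and p1: "prob_space (density \<nu> (\<lambda>z. ennreal (g1 z)))"
    and p2: "prob_space (density \<nu> (\<lambda>z. ennreal (g2 z)))"
    and hm[measurable]: "h \<in> borel_measurable \<nu>" and hb: "\<forall>z\<in>space \<nu>. \<bar>h z\<bar> \<le> B"
    and le: "AE z in \<nu>. g1 z * h z \<le> C * (g2 z * h z)"
  shows "(\<integral>z. h z \<partial>density \<nu> (\<lambda>z. ennreal (g1 z))) \<le> C * (\<integral>z. h z \<partial>density \<nu> (\<lambda>z. ennreal (g2 z)))"
proof -
  have i1: "integrable (density \<nu> (\<lambda>z. ennreal (g1 z))) h"
    by (rule finite_measure.integrable_const_bound[OF prob_space.axioms(1)[OF p1], of _ B]) (use hb in auto)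
  have i2: "integrable (density \<nu> (\<lambda>z. ennreal (g2 z))) h"
    by (rule finite_measure.integrable_const_bound[OF prob_space.axioms(1)[OF p2], of _ B]) (use hb in auto)
  have a1: "AE z in \<nu>. 0 \<le> g1 z" using n1 by auto
  have a2: "AE z in \<nu>. 0 \<le> g2 z" using n2 by auto
  have j1: "integrable \<nu> (\<lambda>z. g1 z * h z)" using i1 integrable_density[OF hm m1 a1] by simp
  have j2: "integrable \<nu> (\<lambda>z. g2 z * h z)" using i2 integrable_density[OF hm m2 a2] by simp
  have "(\<integral>z. h z \<partial>density \<nu> (\<lambda>z. ennreal (g1 z))) = (\<integral>z. g1 z * h z \<partial>\<nu>)"
    using integral_density[OF hm m1 a1] by simp
  also have "\<dots> \<le> (\<integral>z. C * (g2 z * h z) \<partial>\<nu>)"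
    by (rule integral_mono_AE[OF j1 _ le]) (use j2 in auto)
  also have "\<dots> = C * (\<integral>z. g2 z * h z \<partial>\<nu>)" by simp
  also have "(\<integral>z. g2 z * h z \<partial>\<nu>) = (\<integral>z. h z \<partial>density \<nu> (\<lambda>z. ennreal (g2 z)))"
    using integral_density[OF hm m2 a2] by simp
  finally show ?thesis .
qed


lemma ratio_upper:
  fixes a b t :: real
  assumes "0 < a" "0 < b" "ln (a / b) / real n < t" "1 \<le> n"
  shows "a \<le> exp (real n * t) * b"
proof -
  have "ln (a / b) < real n * t" using assms(3,4) by (simp add: divide_less_eq mult.commute)
  hence "exp (ln (a / b)) < exp (real n * t)" by simp
  hence "a / b < exp (real n * t)" using assms(1,2) by simp
  thus ?thesis using assms(2) by (simp add: divide_less_eq less_imp_le)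
qed

lemma ratio_lower:
  fixes a b t :: real
  assumes "0 < a" "0 < b" "t < ln (a / b) / real n" "1 \<le> n"
  shows "b \<le> exp (- (real n * t)) * a"
proof -
  have "real n * t < ln (a / b)" using assms(3,4) by (simp add: less_divide_eq mult.commute)
  hence "exp (real n * t) < exp (ln (a / b))" by simp
  hence "exp (real n * t) < a / b" using assms(1,2) by simp
  hence "exp (real n * t) * b < a" using assms(2) by (simp add: less_divide_eq)
  hence "b < exp (- (real n * t)) * a" by (simp add: exp_minus field_simps)
  thus ?thesis by simp
qed

lemma int_bdd:
  fixes f :: "'z \<Rightarrow> real"
  assumes "prob_space M" "f \<in> borel_measurable M" "\<forall>z\<in>space M. \<bar>f z\<bar> \<le> B"
  shows "integrable M f"
  by (rule finite_measure.integrable_const_bound[OF prob_space.axioms(1)[OF assms(1)], of _ B])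
     (use assms in auto)

theorem lemma5:
  fixes A :: "'a set" and astar ahat :: 'a and c :: "'a \<Rightarrow> real"
    and \<nu> :: "'z measure" and g :: "nat \<Rightarrow> 'a \<Rightarrow> 'z \<Rightarrow> real"
    and I :: "'a \<Rightarrow> 'a \<Rightarrow> real \<Rightarrow> ereal" and Lhat :: "'a \<Rightarrow> 'a \<Rightarrow> real"
    and u :: "real \<Rightarrow> real" and w :: real
    and \<phi> :: "nat \<Rightarrow> real \<Rightarrow> real"
  assumes finA: "finite A" and astar: "astar \<in> A" and ahat: "ahat \<in> A"
    and cost: "c ahat < c astar"
    and sf: "sigma_finite_measure \<nu>"
    and g_meas: "\<And>n a. a \<in> A \<Longrightarrow> g n a \<in> borel_measurable \<nu>"
    and g_nonneg: "\<And>n a z. a \<in> A \<Longrightarrow> z \<in> space \<nu> \<Longrightarrow> 0 \<le> g n a z"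
    and g_prob: "\<And>n a. a \<in> A \<Longrightarrow> prob_space (mu \<nu> g n a)"
    and L_wd: "\<And>n a a'. a \<in> A \<Longrightarrow> a' \<in> A \<Longrightarrow> a' \<noteq> astar \<Longrightarrow>
        AE z in mu \<nu> g n a. 0 < g n astar z \<and> 0 < g n a' z"
    and LDP_lower: "\<And>a a' B. a \<in> A \<Longrightarrow> a' \<in> A \<Longrightarrow> a' \<noteq> astar \<Longrightarrow> B \<in> sets borel \<Longrightarrow>
        - (INF x\<in>interior B. I a a' x) \<le>
          liminf (\<lambda>n. elog (measure (mu \<nu> g n a) {z \<in> space (mu \<nu> g n a). LLR g astar n a' z \<in> B}) / ereal (real n))"
    and LDP_upper: "\<And>a a' B. a \<in> A \<Longrightarrow> a' \<in> A \<Longrightarrow> a' \<noteq> astar \<Longrightarrow> B \<in> sets borel \<Longrightarrow>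
        limsup (\<lambda>n. elog (measure (mu \<nu> g n a) {z \<in> space (mu \<nu> g n a). LLR g astar n a' z \<in> B}) / ereal (real n))
          \<le> - (INF x\<in>closure B. I a a' x)"
    and I_nonneg: "\<And>a a' x. a \<in> A \<Longrightarrow> a' \<in> A \<Longrightarrow> a' \<noteq> astar \<Longrightarrow> 0 \<le> I a a' x"
    and Lhat_min: "\<And>a a' x. a \<in> A \<Longrightarrow> a' \<in> A \<Longrightarrow> a' \<noteq> astar \<Longrightarrow> I a a' (Lhat a a') \<le> I a a' x"
    and Lhat_unique: "\<And>a a' x. a \<in> A \<Longrightarrow> a' \<in> A \<Longrightarrow> a' \<noteq> astar \<Longrightarrow> x \<noteq> Lhat a a' \<Longrightarrow>
        I a a' (Lhat a a') < I a a' x"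
    and Lhat_distinct: "\<And>a b a'. a \<in> A \<Longrightarrow> b \<in> A \<Longrightarrow> a' \<in> A \<Longrightarrow> a' \<noteq> astar \<Longrightarrow> a \<noteq> b \<Longrightarrow>
        Lhat a a' \<noteq> Lhat b a'"
    and I_level: "\<And>a a' \<alpha>. a \<in> A \<Longrightarrow> a' \<in> A \<Longrightarrow> a' \<noteq> astar \<Longrightarrow> compact {x. I a a' x \<le> ereal \<alpha>}"
    and I_cont1: "\<And>a'. a' \<in> A \<Longrightarrow> a' \<noteq> astar \<Longrightarrow> isCont (I astar a') (Lhat a' a')"
    and I_cont2: "\<And>a'. a' \<in> A \<Longrightarrow> a' \<noteq> astar \<Longrightarrow> isCont (I astar a') (Lhat astar a')"
    and u_mono: "strict_mono_on {w..} u"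
    and \<phi>_mono: "\<And>n. mono (\<phi> n)"
    and \<phi>_range: "\<And>n x. \<phi> n x \<in> u ` {w..}"
    and bdd: "\<exists>K. \<forall>n. \<forall>z\<in>space \<nu>. \<bar>\<phi> n (LLR g astar n ahat z)\<bar> \<le> K"
    and IC: "\<And>n. (\<integral>z. \<phi> n (LLR g astar n ahat z) \<partial>(mu \<nu> g n astar)) - c astar
        \<ge> (\<integral>z. \<phi> n (LLR g astar n ahat z) \<partial>(mu \<nu> g n ahat)) - c ahat"
  shows "- I astar ahat (Lhat ahat ahat) \<le>
    liminf (\<lambda>n. elog (var (mu \<nu> g n astar) (\<lambda>z. \<phi> n (LLR g astar n ahat z))) / ereal (real n))"
  proof -
  have ne: "ahat \<noteq> astar" using cost by auto
  define l where "l = Lhat ahat ahat"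
  define D where "D = c astar - c ahat"
  have Dpos: "D > 0" using cost unfolding D_def by simp
  obtain K0 where K0: "\<forall>n. \<forall>z\<in>space \<nu>. \<bar>\<phi> n (LLR g astar n ahat z)\<bar> \<le> K0" using bdd by blast
  define K where "K = \<bar>K0\<bar> + 1"
  have Kpos: "K > 0" unfolding K_def by simp
  have Kb: "\<And>n z. z \<in> space \<nu> \<Longrightarrow> \<bar>\<phi> n (LLR g astar n ahat z)\<bar> \<le> K"
  proof -
    fix n z assume "z \<in> space \<nu>"
    hence "\<bar>\<phi> n (LLR g astar n ahat z)\<bar> \<le> K0" using K0 by blast
    thus "\<bar>\<phi> n (LLR g astar n ahat z)\<bar> \<le> K" unfolding K_def by linarith
  qed
  have gm1[measurable]: "\<And>n. g n astar \<in> borel_measurable \<nu>" using g_meas[OF astar] .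
  have gm2[measurable]: "\<And>n. g n ahat \<in> borel_measurable \<nu>" using g_meas[OF ahat] .
  have Lm[measurable]: "\<And>n. (\<lambda>z. LLR g astar n ahat z) \<in> borel_measurable \<nu>"
    unfolding LLR_def by measurable
  have Ym[measurable]: "\<And>n. (\<lambda>z. \<phi> n (LLR g astar n ahat z)) \<in> borel_measurable \<nu>"
    using measurable_compose[OF Lm borel_measurable_mono[OF \<phi>_mono]] by simp
  have space_mu[simp]: "\<And>n a. space (mu \<nu> g n a) = space \<nu>" unfolding mu_def by simp
  have sets_mu[simp]: "\<And>n a. sets (mu \<nu> g n a) = sets \<nu>" unfolding mu_def by simp
  have meas_mu[simp]: "\<And>n a f. f \<in> borel_measurable (mu \<nu> g n a) \<longleftrightarrow> f \<in> borel_measurable \<nu>"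
    unfolding mu_def by simp
  have P1: "\<And>n. prob_space (mu \<nu> g n astar)" using g_prob[OF astar] .
  have P2: "\<And>n. prob_space (mu \<nu> g n ahat)" using g_prob[OF ahat] .
  have A: "I ahat ahat l \<le> 0"
  proof -
    have "limsup (\<lambda>n. elog (measure (mu \<nu> g n ahat) {z \<in> space (mu \<nu> g n ahat). LLR g astar n ahat z \<in> UNIV}) / ereal (real n))
          \<le> - (INF x\<in>closure UNIV. I ahat ahat x)"
      by (rule LDP_upper[OF ahat ahat ne]) simp
    moreover have "\<And>n. elog (measure (mu \<nu> g n ahat) {z \<in> space (mu \<nu> g n ahat). LLR g astar n ahat z \<in> UNIV}) / ereal (real n) = 0"
      using prob_space.prob_space[OF P2] by (simp add: elog_def zero_ereal_def[symmetric])
    ultimately have "limsup (\<lambda>n::nat. 0::ereal) \<le> - (INF x. I ahat ahat x)" by simp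
    hence "0 \<le> - (INF x. I ahat ahat x)" by (simp add: Limsup_const[OF trivial_limit_sequentially])
    hence "(INF x. I ahat ahat x) \<le> 0" by (simp add: ereal_0_le_uminus_iff)
    moreover have "I ahat ahat l \<le> (INF x. I ahat ahat x)"
      unfolding l_def by (rule INF_greatest) (rule Lhat_min[OF ahat ahat ne])
    ultimately show ?thesis by simp
  qed
  have B: "\<exists>e>0. \<forall>x\<in>- ball l d. ereal e \<le> I ahat ahat x" if dpos: "d > 0" for d
  proof (rule ccontr)
    assume H: "\<not> ?thesis"
    hence H': "\<And>e. e > 0 \<Longrightarrow> \<exists>x\<in>- ball l d. I ahat ahat x < ereal e"
      by (meson not_le)
    define s where "s = - ball l d \<inter> {x. I ahat ahat x \<le> ereal 1}"
    have cs: "compact s" unfolding s_def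
      by (rule closed_Int_compact) (auto intro: I_level[OF ahat ahat ne])
    have "s \<inter> (\<Inter>e\<in>{0<..}. {x. I ahat ahat x \<le> ereal e}) \<noteq> {}"
    proof (rule compact_imp_fip_image[OF cs])
      fix e :: real assume "e \<in> {0<..}"
      show "closed {x. I ahat ahat x \<le> ereal e}"
        by (rule compact_imp_closed) (rule I_level[OF ahat ahat ne])
    next
      fix E :: "real set" assume fE: "finite E" and sE: "E \<subseteq> {0<..}"
      define e0 where "e0 = Min (insert 1 E)"
      have e0pos: "e0 > 0" unfolding e0_def using fE sE by (subst Min_gr_iff) auto
      have e0le: "\<And>e. e \<in> insert 1 E \<Longrightarrow> e0 \<le> e" unfolding e0_def using fE by simp
      obtain x where x: "x \<in> - ball l d" "I ahat ahat x < ereal e0" using H'[OF e0pos] by blast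
      have "x \<in> s" unfolding s_def using x e0le[of 1] by (auto intro: order.trans[OF less_imp_le])
      moreover have "x \<in> (\<Inter>e\<in>E. {x. I ahat ahat x \<le> ereal e})"
        using x e0le by (auto intro: order.trans[OF less_imp_le])
      ultimately show "s \<inter> (\<Inter>e\<in>E. {x. I ahat ahat x \<le> ereal e}) \<noteq> {}" by blast
    qed
    then obtain x where xs: "x \<in> s" and xall: "\<And>e. e > 0 \<Longrightarrow> I ahat ahat x \<le> ereal e" by auto
    have "I ahat ahat x \<le> 0"
      by (rule ereal_le_epsilon2) (use xall in simp)
    moreover have "x \<noteq> l" using xs dpos unfolding s_def by auto
    hence "I ahat ahat l < I ahat ahat x" unfolding l_def by (rule Lhat_unique[OF ahat ahat ne])
    moreover have "0 \<le> I ahat ahat l" by (rule I_nonneg[OF ahat ahat ne])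
    ultimately show False by simp
  qed
  have C: "eventually (\<lambda>n. measure (mu \<nu> g n ahat) {z \<in> space \<nu>. LLR g astar n ahat z \<in> - ball l d} \<le> D / (4 * K)) sequentially"
    if dpos: "d > 0" for d
  proof -
    obtain e where epos: "e > 0" and eI: "\<forall>x\<in>- ball l d. ereal e \<le> I ahat ahat x" using B[OF dpos] by blast
    define P where "P n = measure (mu \<nu> g n ahat) {z \<in> space \<nu>. LLR g astar n ahat z \<in> - ball l d}" for n
    have "limsup (\<lambda>n. elog (measure (mu \<nu> g n ahat) {z \<in> space (mu \<nu> g n ahat). LLR g astar n ahat z \<in> - ball l d}) / ereal (real n))
          \<le> - (INF x\<in>closure (- ball l d). I ahat ahat x)"
      by (rule LDP_upper[OF ahat ahat ne]) (intro borel_closed, auto)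
    moreover have "closure (- ball l d) = - ball l d" by (rule closure_closed) auto
    moreover have "ereal e \<le> (INF x\<in>- ball l d. I ahat ahat x)" by (rule INF_greatest) (use eI in auto)
    hence "- (INF x\<in>- ball l d. I ahat ahat x) \<le> ereal (- e)" by (simp add: ereal_uminus_le_reorder)
    ultimately have ls: "limsup (\<lambda>n. elog (P n) / ereal (real n)) \<le> ereal (- e)"
      unfolding P_def by simp
    have ev1: "eventually (\<lambda>n. elog (P n) / ereal (real n) < ereal (- e / 2)) sequentially"
      using ls unfolding Limsup_le_iff using epos by auto
    have lim: "(\<lambda>n. exp (- e / 2) ^ n) \<longlonglongrightarrow> 0"
      by (rule LIMSEQ_power_zero) (use epos in simp)
    have ev2: "eventually (\<lambda>n. exp (- e / 2) ^ n < D / (4 * K)) sequentially"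
      by (rule order_tendstoD(2)[OF lim]) (use Dpos Kpos in simp)
    show ?thesis
      using eventually_conj[OF ev1 eventually_conj[OF ev2 eventually_ge_at_top[of 1]]]
    proof (rule eventually_mono)
      fix n :: nat assume h: "elog (P n) / ereal (real n) < ereal (- e / 2) \<and> exp (- e / 2) ^ n < D / (4 * K) \<and> 1 \<le> n"
      have P0: "P n \<ge> 0" unfolding P_def by simp
      have "P n \<le> D / (4 * K)"
      proof (cases "P n = 0")
        case True thus ?thesis using Dpos Kpos by simp
      next
        case False
        hence Pp: "P n > 0" using P0 by simp
        have "ereal (ln (P n) / real n) < ereal (- e / 2)"
          using h False by (simp add: elog_def split: if_splits)
        hence "ln (P n) / real n < - e / 2" by simp
        hence "ln (P n) < real n * (- e / 2)" using h by (simp add: divide_less_eq mult.commute)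
        hence "exp (ln (P n)) < exp (real n * (- e / 2))" by simp
        moreover have "exp (real n * (- e / 2)) = exp (- e / 2) ^ n" by (rule exp_of_nat_mult)
        ultimately have "P n < exp (- e / 2) ^ n" using Pp by simp
        thus ?thesis using h by simp
      qed
      thus "measure (mu \<nu> g n ahat) {z \<in> space \<nu>. LLR g astar n ahat z \<in> - ball l d} \<le> D / (4 * K)"
        unfolding P_def .
    qed
  qed
  define S where "S n d = {z \<in> space \<nu>. LLR g astar n ahat z \<in> ball l d}" for n d
  have S_sets: "S n d \<in> sets \<nu>" for n d
  proof -
    have "(\<lambda>z. LLR g astar n ahat z) -` ball l d \<inter> space \<nu> \<in> sets \<nu>"
      by (rule measurable_sets[OF Lm]) simp
    moreover have "(\<lambda>z. LLR g astar n ahat z) -` ball l d \<inter> space \<nu> = S n d" unfolding S_def by auto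
    ultimately show ?thesis by simp
  qed
  have S_sub: "S n d \<subseteq> space \<nu>" for n d unfolding S_def by auto
  have AE1: "AE z in \<nu>. 0 < g n astar z \<longrightarrow> 0 < g n ahat z" for n
  proof -
    have "AE z in mu \<nu> g n astar. 0 < g n astar z \<and> 0 < g n ahat z" by (rule L_wd[OF astar ahat ne])
    thus ?thesis unfolding mu_def by (subst (asm) AE_density) (auto elim: AE_mp)
  qed
  have AE2: "AE z in \<nu>. 0 < g n ahat z \<longrightarrow> 0 < g n astar z" for n
  proof -
    have "AE z in mu \<nu> g n ahat. 0 < g n astar z \<and> 0 < g n ahat z" by (rule L_wd[OF ahat ahat ne])
    thus ?thesis unfolding mu_def by (subst (asm) AE_density) (auto elim: AE_mp)
  qed
  have Dint: "(\<integral>z. indicator (S n d) z \<partial>mu \<nu> g n astar) \<le> exp (real n * (l + d)) * (\<integral>z. indicator (S n d) z \<partial>mu \<nu> g n ahat)"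
    if n1: "1 \<le> n" for n d
    unfolding mu_def
  proof (rule dens_cmp[where B=1])
    show "\<forall>z\<in>space \<nu>. 0 \<le> g n astar z" using g_nonneg[OF astar] by auto
    show "\<forall>z\<in>space \<nu>. 0 \<le> g n ahat z" using g_nonneg[OF ahat] by auto
    show "prob_space (density \<nu> (\<lambda>z. ennreal (g n astar z)))" using P1[of n] unfolding mu_def .
    show "prob_space (density \<nu> (\<lambda>z. ennreal (g n ahat z)))" using P2[of n] unfolding mu_def .
    show "indicator (S n d) \<in> borel_measurable \<nu>" using S_sets by simp
    show "\<forall>z\<in>space \<nu>. \<bar>indicator (S n d) z :: real\<bar> \<le> 1" by (auto simp: indicator_def)
    show "AE z in \<nu>. g n astar z * indicator (S n d) z \<le> exp (real n * (l + d)) * (g n ahat z * indicator (S n d) z)"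
      using AE1[of n] AE_space
    proof (eventually_elim)
      case (elim z)
      show ?case
      proof (cases "z \<in> S n d \<and> 0 < g n astar z")
        case True
        hence "0 < g n ahat z" using elim by auto
        moreover have "LLR g astar n ahat z < l + d" using True unfolding S_def by (auto simp: dist_real_def)
        ultimately have "g n astar z \<le> exp (real n * (l + d)) * g n ahat z"
          using True n1 by (intro ratio_upper) (auto simp: LLR_def)
        thus ?thesis using True by simp
      next
        case False
        have "0 \<le> g n ahat z" "0 \<le> g n astar z" using elim g_nonneg[OF ahat] g_nonneg[OF astar] by auto
        thus ?thesis using False by (auto simp: indicator_def)
      qed
    qed
  qed simp_all
  have Dmeas: "measure (mu \<nu> g n astar) (S n d) \<le> exp (real n * (l + d))" if n1: "1 \<le> n" for n d
  proof -
    have "measure (mu \<nu> g n astar) (S n d) = (\<integral>z. indicator (S n d) z \<partial>mu \<nu> g n astar)"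
      using S_sub by (simp add: Int_absorb2)
    also have "\<dots> \<le> exp (real n * (l + d)) * (\<integral>z. indicator (S n d) z \<partial>mu \<nu> g n ahat)" by (rule Dint[OF n1])
    also have "(\<integral>z. indicator (S n d) z \<partial>mu \<nu> g n ahat) = measure (mu \<nu> g n ahat) (S n d)"
      using S_sub by (simp add: Int_absorb2)
    also have "\<dots> \<le> 1" using prob_space.prob_le_1[OF P2] .
    finally show ?thesis by simp
  qed
  have E: "- I astar ahat l \<le> ereal (l + d)" if dpos: "d > 0" for d
  proof -
    have "- (INF x\<in>interior (ball l d). I astar ahat x) \<le>
          liminf (\<lambda>n. elog (measure (mu \<nu> g n astar) {z \<in> space (mu \<nu> g n astar). LLR g astar n ahat z \<in> ball l d}) / ereal (real n))"
      by (rule LDP_lower[OF astar ahat ne]) simp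
    hence 1: "- (INF x\<in>ball l d. I astar ahat x) \<le> liminf (\<lambda>n. elog (measure (mu \<nu> g n astar) (S n d)) / ereal (real n))"
      unfolding S_def by simp
    have "(INF x\<in>ball l d. I astar ahat x) \<le> I astar ahat l" by (rule INF_lower) (use dpos in simp)
    hence 2: "- I astar ahat l \<le> - (INF x\<in>ball l d. I astar ahat x)" by simp
    have "liminf (\<lambda>n. elog (measure (mu \<nu> g n astar) (S n d)) / ereal (real n))
        \<le> limsup (\<lambda>n. elog (measure (mu \<nu> g n astar) (S n d)) / ereal (real n))"
      by (rule Liminf_le_Limsup) simp
    also have "\<dots> \<le> ereal (l + d)"
    proof (rule Limsup_bounded)
      show "eventually (\<lambda>n. elog (measure (mu \<nu> g n astar) (S n d)) / ereal (real n) \<le> ereal (l + d)) sequentially"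
        using eventually_ge_at_top[of 1]
      proof (rule eventually_mono)
        fix n :: nat assume n1: "1 \<le> n"
        define p where "p = measure (mu \<nu> g n astar) (S n d)"
        have p0: "0 \<le> p" unfolding p_def by simp
        have pb: "p \<le> exp (real n * (l + d))" unfolding p_def by (rule Dmeas[OF n1])
        have "elog p / ereal (real n) \<le> ereal (l + d)"
        proof (cases "p = 0")
          case True thus ?thesis using n1 by (simp add: elog_def)
        next
          case False
          hence pp: "p > 0" using p0 by simp
          have "ln p \<le> ln (exp (real n * (l + d)))" using pb pp by (subst ln_le_cancel_iff) auto
          hence "ln p \<le> real n * (l + d)" by simp
          hence "ln p / real n \<le> l + d" using n1 by (simp add: divide_le_eq mult.commute)
          thus ?thesis using False n1 by (simp add: elog_def)
        qed
        thus "elog (measure (mu \<nu> g n astar) (S n d)) / ereal (real n) \<le> ereal (l + d)"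
          unfolding p_def .
      qed
    qed
    finally have 3: "liminf (\<lambda>n. elog (measure (mu \<nu> g n astar) (S n d)) / ereal (real n)) \<le> ereal (l + d)" .
    show ?thesis using order.trans[OF 2 order.trans[OF 1 3]] .
  qed
  have F: "eventually (\<lambda>n. D\<^sup>2 / 4 * exp (real n * (l - 3 * d)) \<le> var (mu \<nu> g n astar) (\<lambda>z. \<phi> n (LLR g astar n ahat z))) sequentially"
    if dpos: "d > 0" for d
    using eventually_conj[OF C[OF dpos] eventually_ge_at_top[of 1]]
  proof (rule eventually_mono)
    fix n :: nat
    assume h: "measure (mu \<nu> g n ahat) {z \<in> space \<nu>. LLR g astar n ahat z \<in> - ball l d} \<le> D / (4 * K) \<and> 1 \<le> n"
    hence n1: "1 \<le> n" by simp
    define M1 where "M1 = mu \<nu> g n astar"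
    define M2 where "M2 = mu \<nu> g n ahat"
    define Y where "Y z = \<phi> n (LLR g astar n ahat z)" for z
    define m where "m = (\<integral>z. Y z \<partial>M1)"
    define Sc where "Sc = {z \<in> space \<nu>. LLR g astar n ahat z \<in> - ball l d}"
    have pM1: "prob_space M1" unfolding M1_def by (rule P1)
    have pM2: "prob_space M2" unfolding M2_def by (rule P2)
    have spM1[simp]: "space M1 = space \<nu>" unfolding M1_def by simp
    have spM2[simp]: "space M2 = space \<nu>" unfolding M2_def by simp
    have Ym1[measurable]: "Y \<in> borel_measurable M1" unfolding M1_def Y_def by simp
    have Ym2[measurable]: "Y \<in> borel_measurable M2" unfolding M2_def Y_def by simp
    have Sm1[measurable]: "S n d \<in> sets M1" unfolding M1_def using S_sets by simp
    have Sm2[measurable]: "S n d \<in> sets M2" unfolding M2_def using S_sets by simp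
    have Scm2[measurable]: "Sc \<in> sets M2"
    proof -
      have "Sc = space \<nu> - S n d" unfolding Sc_def S_def by auto
      thus ?thesis using Sm2 by (metis sets.compl_sets spM2)
    qed
    have Yb: "\<And>z. z \<in> space \<nu> \<Longrightarrow> \<bar>Y z\<bar> \<le> K" unfolding Y_def by (rule Kb)
    have iY1: "integrable M1 Y" by (rule int_bdd[OF pM1 Ym1, of K]) (use Yb in auto)
    have iY2: "integrable M2 Y" by (rule int_bdd[OF pM2 Ym2, of K]) (use Yb in auto)
    have mb: "\<bar>m\<bar> \<le> K"
    proof -
      have "\<bar>m\<bar> \<le> (\<integral>z. \<bar>Y z\<bar> \<partial>M1)" unfolding m_def by (rule integral_abs_bound)
      also have "\<dots> \<le> (\<integral>z. K \<partial>M1)"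
        by (rule integral_mono) (use iY1 Yb in \<open>auto intro: int_bdd[OF pM1]\<close>)
      also have "\<dots> = K" using prob_space.prob_space[OF pM1] by simp
      finally show ?thesis .
    qed
    have Xb: "\<And>z. z \<in> space \<nu> \<Longrightarrow> \<bar>Y z - m\<bar> \<le> 2 * K" using Yb mb by (smt (verit))
    have ic: "(\<integral>z. Y z \<partial>M2) \<le> m - D"
      using IC[of n] unfolding m_def Y_def M1_def M2_def D_def by simp
    have i2: "D \<le> (\<integral>z. (m - Y z) \<partial>M2)"
    proof -
      have "(\<integral>z. (m - Y z) \<partial>M2) = (\<integral>z. m \<partial>M2) - (\<integral>z. Y z \<partial>M2)"
        by (rule Bochner_Integration.integral_diff) (use iY2 pM2 in \<open>auto intro: finite_measure.integrable_const prob_space.axioms(1)\<close>)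
      also have "(\<integral>z. m \<partial>M2) = m" using prob_space.prob_space[OF pM2] by simp
      finally show ?thesis using ic by simp
    qed
    have iA2: "integrable M2 (\<lambda>z. \<bar>Y z - m\<bar> * indicator (S n d) z)"
      by (rule int_bdd[OF pM2 _, of _ "2 * K"]) (use Xb Kpos in \<open>auto simp: indicator_def\<close>)
    have iA1: "integrable M1 (\<lambda>z. \<bar>Y z - m\<bar> * indicator (S n d) z)"
      by (rule int_bdd[OF pM1 _, of _ "2 * K"]) (use Xb Kpos in \<open>auto simp: indicator_def\<close>)
    have iSc: "integrable M2 (\<lambda>z. 2 * K * indicator Sc z)"
      by (rule int_bdd[OF pM2 _, of _ "2 * K"]) (use Kpos in \<open>auto simp: indicator_def\<close>)
    have "(\<integral>z. (m - Y z) \<partial>M2) \<le> (\<integral>z. \<bar>Y z - m\<bar> * indicator (S n d) z + 2 * K * indicator Sc z \<partial>M2)"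
    proof (rule integral_mono)
      show "integrable M2 (\<lambda>z. m - Y z)"
        by (rule int_bdd[OF pM2 _, of _ "2 * K"]) (use Xb in \<open>auto simp: abs_minus_commute\<close>)
      show "integrable M2 (\<lambda>z. \<bar>Y z - m\<bar> * indicator (S n d) z + 2 * K * indicator Sc z)"
        using iA2 iSc by simp
      fix z assume z: "z \<in> space M2"
      show "m - Y z \<le> \<bar>Y z - m\<bar> * indicator (S n d) z + 2 * K * indicator Sc z"
      proof (cases "z \<in> S n d")
        case True thus ?thesis using Kpos by (simp add: indicator_def Sc_def S_def)
      next
        case False
        hence "z \<in> Sc" using z unfolding Sc_def S_def by auto
        thus ?thesis using False Xb[of z] z by (auto simp: indicator_def)
      qed
    qed
    also have "\<dots> = (\<integral>z. \<bar>Y z - m\<bar> * indicator (S n d) z \<partial>M2) + 2 * K * measure M2 Sc"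
      using iA2 iSc Scm2 by (simp add: Int_absorb2 Sc_def)
    finally have "D \<le> (\<integral>z. \<bar>Y z - m\<bar> * indicator (S n d) z \<partial>M2) + 2 * K * measure M2 Sc"
      using i2 by simp
    moreover have "2 * K * measure M2 Sc \<le> D / 2"
    proof -
      have "measure M2 Sc \<le> D / (4 * K)" using h unfolding M2_def Sc_def by simp
      hence "2 * K * measure M2 Sc \<le> 2 * K * (D / (4 * K))" using Kpos by (intro mult_left_mono) auto
      also have "\<dots> = D / 2" using Kpos by simp
      finally show ?thesis .
    qed
    ultimately have a2: "D / 2 \<le> (\<integral>z. \<bar>Y z - m\<bar> * indicator (S n d) z \<partial>M2)" by simp
    have a21: "(\<integral>z. \<bar>Y z - m\<bar> * indicator (S n d) z \<partial>M2) \<le> exp (- (real n * (l - d))) * (\<integral>z. \<bar>Y z - m\<bar> * indicator (S n d) z \<partial>M1)"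
      unfolding M1_def M2_def mu_def
    proof (rule dens_cmp[where B="2 * K"])
      show "\<forall>z\<in>space \<nu>. 0 \<le> g n astar z" using g_nonneg[OF astar] by auto
      show "\<forall>z\<in>space \<nu>. 0 \<le> g n ahat z" using g_nonneg[OF ahat] by auto
      show "prob_space (density \<nu> (\<lambda>z. ennreal (g n astar z)))" using P1[of n] unfolding mu_def .
      show "prob_space (density \<nu> (\<lambda>z. ennreal (g n ahat z)))" using P2[of n] unfolding mu_def .
      show "(\<lambda>z. \<bar>Y z - m\<bar> * indicator (S n d) z) \<in> borel_measurable \<nu>"
        using S_sets unfolding Y_def by simp
      show "\<forall>z\<in>space \<nu>. \<bar>\<bar>Y z - m\<bar> * indicator (S n d) z\<bar> \<le> 2 * K"
        using Xb Kpos by (auto simp: indicator_def)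
      show "AE z in \<nu>. g n ahat z * (\<bar>Y z - m\<bar> * indicator (S n d) z)
              \<le> exp (- (real n * (l - d))) * (g n astar z * (\<bar>Y z - m\<bar> * indicator (S n d) z))"
        using AE2[of n] AE_space
      proof (eventually_elim)
        case (elim z)
        have g0: "0 \<le> g n ahat z" "0 \<le> g n astar z" using elim g_nonneg[OF ahat] g_nonneg[OF astar] by auto
        show ?case
        proof (cases "z \<in> S n d \<and> 0 < g n ahat z")
          case True
          hence "0 < g n astar z" using elim by auto
          moreover have "l - d < LLR g astar n ahat z" using True unfolding S_def by (auto simp: dist_real_def)
          ultimately have "g n ahat z \<le> exp (- (real n * (l - d))) * g n astar z"
            using True n1 by (intro ratio_lower) (auto simp: LLR_def)
          hence "g n ahat z * \<bar>Y z - m\<bar> \<le> (exp (- (real n * (l - d))) * g n astar z) * \<bar>Y z - m\<bar>"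
            by (rule mult_right_mono) simp
          thus ?thesis using True by (simp add: mult_ac)
        next
          case False
          thus ?thesis using g0 by (auto simp: indicator_def)
        qed
      qed
    qed simp_all
    define a1 where "a1 = (\<integral>z. \<bar>Y z - m\<bar> * indicator (S n d) z \<partial>M1)"
    define b :: real where "b = (\<integral>z. indicator (S n d) z \<partial>M1)"
    have a1b: "D / 2 * exp (real n * (l - d)) \<le> a1"
    proof -
      have "D / 2 * exp (real n * (l - d)) \<le> exp (- (real n * (l - d))) * a1 * exp (real n * (l - d))"
        using a2 a21 unfolding a1_def by (intro mult_right_mono) auto
      also have "\<dots> = a1 * (exp (- (real n * (l - d))) * exp (real n * (l - d)))" by (simp add: mult_ac)
      also have "exp (- (real n * (l - d))) * exp (real n * (l - d)) = 1" by (simp add: exp_minus)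
      finally show ?thesis by simp
    qed
    have bb: "b \<le> exp (real n * (l + d))"
      using Dmeas[OF n1, of d] S_sub unfolding b_def M1_def by (simp add: Int_absorb2)
    define t where "t = D / 2 * exp (- (2 * real n * d))"
    have tpos: "t > 0" unfolding t_def using Dpos by simp
    have "(\<integral>z. 2 * t * (\<bar>Y z - m\<bar> * indicator (S n d) z) - t\<^sup>2 * indicator (S n d) z \<partial>M1)
          \<le> (\<integral>z. (Y z - (\<integral>y. Y y \<partial>M1))\<^sup>2 \<partial>M1)"
    proof (rule integral_mono)
      show "integrable M1 (\<lambda>z. 2 * t * (\<bar>Y z - m\<bar> * indicator (S n d) z) - t\<^sup>2 * indicator (S n d) z)"
        using iA1 by (intro Bochner_Integration.integrable_diff) (auto intro!: int_bdd[OF pM1 _, of _ 1] simp: indicator_def)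
      show "integrable M1 (\<lambda>z. (Y z - (\<integral>y. Y y \<partial>M1))\<^sup>2)"
        unfolding m_def[symmetric]
      proof (rule int_bdd[OF pM1 _, of _ "(2 * K)\<^sup>2"])
        show "\<forall>z\<in>space M1. \<bar>(Y z - m)\<^sup>2\<bar> \<le> (2 * K)\<^sup>2"
        proof
          fix z assume "z \<in> space M1"
          hence "\<bar>Y z - m\<bar> \<le> 2 * K" using Xb by simp
          hence "\<bar>Y z - m\<bar>\<^sup>2 \<le> (2 * K)\<^sup>2" by (rule power_mono) simp
          thus "\<bar>(Y z - m)\<^sup>2\<bar> \<le> (2 * K)\<^sup>2" by simp
        qed
      qed simp
      fix z assume z: "z \<in> space M1"
      show "2 * t * (\<bar>Y z - m\<bar> * indicator (S n d) z) - t\<^sup>2 * indicator (S n d) z \<le> (Y z - (\<integral>y. Y y \<partial>M1))\<^sup>2"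
      proof (cases "z \<in> S n d")
        case True
        have "0 \<le> (\<bar>Y z - m\<bar> - t)\<^sup>2" by simp
        hence "2 * t * \<bar>Y z - m\<bar> - t\<^sup>2 \<le> \<bar>Y z - m\<bar>\<^sup>2" by (simp add: power2_eq_square algebra_simps)
        thus ?thesis using True by (simp add: m_def)
      next
        case False thus ?thesis by simp
      qed
    qed
    also have "(\<integral>z. (Y z - (\<integral>y. Y y \<partial>M1))\<^sup>2 \<partial>M1) = var (mu \<nu> g n astar) (\<lambda>z. \<phi> n (LLR g astar n ahat z))"
      unfolding var_def M1_def Y_def ..
    also have "(\<integral>z. 2 * t * (\<bar>Y z - m\<bar> * indicator (S n d) z) - t\<^sup>2 * indicator (S n d) z \<partial>M1) = 2 * t * a1 - t\<^sup>2 * b"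
    proof -
      have iS: "integrable M1 (\<lambda>z. indicator (S n d) z :: real)"
        by (rule int_bdd[OF pM1 _, of _ 1]) (auto simp: indicator_def)
      show ?thesis unfolding a1_def b_def
        using iA1 iS by (simp add: Bochner_Integration.integral_diff)
    qed
    finally have vb: "2 * t * a1 - t\<^sup>2 * b \<le> var (mu \<nu> g n astar) (\<lambda>z. \<phi> n (LLR g astar n ahat z))" .
    have x1: "exp (- (2 * real n * d)) * exp (real n * (l - d)) = exp (real n * (l - 3 * d))"
      by (simp add: mult_exp_exp algebra_simps)
    have x2: "exp (- (2 * real n * d)) * exp (- (2 * real n * d)) * exp (real n * (l + d)) = exp (real n * (l - 3 * d))"
      by (simp add: mult_exp_exp algebra_simps)
    have "2 * t * (D / 2 * exp (real n * (l - d))) - t\<^sup>2 * exp (real n * (l + d)) \<le> 2 * t * a1 - t\<^sup>2 * b"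
    proof -
      have "2 * t * (D / 2 * exp (real n * (l - d))) \<le> 2 * t * a1" using a1b tpos by simp
      moreover have "t\<^sup>2 * b \<le> t\<^sup>2 * exp (real n * (l + d))" using bb by (simp add: mult_left_mono)
      ultimately show ?thesis by simp
    qed
    moreover have "2 * t * (D / 2 * exp (real n * (l - d))) - t\<^sup>2 * exp (real n * (l + d)) = D\<^sup>2 / 4 * exp (real n * (l - 3 * d))"
    proof -
      have "2 * t * (D / 2 * exp (real n * (l - d))) = D\<^sup>2 / 2 * (exp (- (2 * real n * d)) * exp (real n * (l - d)))"
        unfolding t_def by (simp add: power2_eq_square)
      moreover have "t\<^sup>2 * exp (real n * (l + d)) = D\<^sup>2 / 4 * (exp (- (2 * real n * d)) * exp (- (2 * real n * d)) * exp (real n * (l + d)))"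
        unfolding t_def by (simp add: power2_eq_square)
      ultimately have e1: "2 * t * (D / 2 * exp (real n * (l - d))) = D\<^sup>2 / 2 * exp (real n * (l - 3 * d))"
        and e2: "t\<^sup>2 * exp (real n * (l + d)) = D\<^sup>2 / 4 * exp (real n * (l - 3 * d))"
        unfolding x1 x2 by simp_all
      show ?thesis unfolding e1 e2 by simp
    qed
    ultimately show "D\<^sup>2 / 4 * exp (real n * (l - 3 * d)) \<le> var (mu \<nu> g n astar) (\<lambda>z. \<phi> n (LLR g astar n ahat z))"
      using vb by simp
  qed
  have G: "ereal (l - 4 * d) \<le> liminf (\<lambda>n. elog (var (mu \<nu> g n astar) (\<lambda>z. \<phi> n (LLR g astar n ahat z))) / ereal (real n))"
    if dpos: "d > 0" for d
  proof (rule Liminf_bounded)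
    have lim: "(\<lambda>n. ln (D\<^sup>2 / 4) / real n) \<longlonglongrightarrow> 0" by (rule lim_const_over_n)
    have ev: "eventually (\<lambda>n. - d < ln (D\<^sup>2 / 4) / real n) sequentially"
      by (rule order_tendstoD(1)[OF lim]) (use dpos in simp)
    show "eventually (\<lambda>n. ereal (l - 4 * d) \<le> elog (var (mu \<nu> g n astar) (\<lambda>z. \<phi> n (LLR g astar n ahat z))) / ereal (real n)) sequentially"
      using eventually_conj[OF F[OF dpos] eventually_conj[OF ev eventually_ge_at_top[of 1]]]
    proof (rule eventually_mono)
      fix n :: nat
      define V where "V = var (mu \<nu> g n astar) (\<lambda>z. \<phi> n (LLR g astar n ahat z))"
      assume h: "D\<^sup>2 / 4 * exp (real n * (l - 3 * d)) \<le> var (mu \<nu> g n astar) (\<lambda>z. \<phi> n (LLR g astar n ahat z))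
         \<and> - d < ln (D\<^sup>2 / 4) / real n \<and> 1 \<le> n"
      hence hV: "D\<^sup>2 / 4 * exp (real n * (l - 3 * d)) \<le> V" and hl: "- d < ln (D\<^sup>2 / 4) / real n"
        and n1: "1 \<le> n" unfolding V_def by auto
      have pos: "0 < D\<^sup>2 / 4 * exp (real n * (l - 3 * d))" using Dpos by simp
      hence Vpos: "0 < V" using hV by linarith
      have "ln (D\<^sup>2 / 4 * exp (real n * (l - 3 * d))) \<le> ln V"
        using hV pos Vpos by (subst ln_le_cancel_iff) auto
      moreover have "ln (D\<^sup>2 / 4 * exp (real n * (l - 3 * d))) = ln (D\<^sup>2 / 4) + real n * (l - 3 * d)"
        using Dpos by (subst ln_mult) auto
      ultimately have "ln (D\<^sup>2 / 4) + real n * (l - 3 * d) \<le> ln V" by simp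
      hence "(ln (D\<^sup>2 / 4) + real n * (l - 3 * d)) / real n \<le> ln V / real n"
        using n1 by (intro divide_right_mono) auto
      moreover have "(ln (D\<^sup>2 / 4) + real n * (l - 3 * d)) / real n = ln (D\<^sup>2 / 4) / real n + (l - 3 * d)"
        using n1 by (simp add: add_divide_distrib)
      ultimately have "l - 4 * d \<le> ln V / real n" using hl by simp
      hence "ereal (l - 4 * d) \<le> elog V / ereal (real n)" using Vpos n1 by (simp add: elog_def)
      thus "ereal (l - 4 * d) \<le> elog (var (mu \<nu> g n astar) (\<lambda>z. \<phi> n (LLR g astar n ahat z))) / ereal (real n)"
        unfolding V_def .
    qed
  qed
  show ?thesis
  proof (rule ereal_le_epsilon2)
    fix e :: real assume epos: "0 < e"
    define d where "d = e / 5"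
    have dpos: "d > 0" unfolding d_def using epos by simp
    have "- I astar ahat (Lhat ahat ahat) \<le> ereal (l + d)" using E[OF dpos] unfolding l_def .
    also have "ereal (l + d) = ereal (l - 4 * d) + ereal e" unfolding d_def by simp
    also have "\<dots> \<le> liminf (\<lambda>n. elog (var (mu \<nu> g n astar) (\<lambda>z. \<phi> n (LLR g astar n ahat z))) / ereal (real n)) + ereal e"
      by (rule add_right_mono[OF G[OF dpos]])
    finally show "- I astar ahat (Lhat ahat ahat) \<le> liminf (\<lambda>n. elog (var (mu \<nu> g n astar) (\<lambda>z. \<phi> n (LLR g astar n ahat z))) / ereal (real n)) + ereal e" .
  qed
qed

end
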